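(* Consider problem (PI): minimize $f(x)$ subject to $x\in X$, $g_i(x)\le 0$, $i=1,\dots,m$, where $\Gamma\subseteq\mathbb R^n$ is an open convex set and $X\subseteq\Gamma$ is convex. Let $\bar S$ be its solution set and $\bar x\in\bar S$. Assume $f:\Gamma\to\mathbb R$ is continuously differentiable and quasiconvex on $\Gamma$, $g_i$ for $i\in I(\bar x)$ are differentiable and quasiconvex on $\Gamma$, $g_i$ for $i\notin I(\bar x)$ are continuous at $\bar x$, $\nabla f(\bar x)\ne 0$, GMFCQ holds at $\bar x$, and $\lambda$ is a (fixed) KKT multiplier at $\bar x$. Define \[ \hat S_1'(\lambda):=\Big\{x\in X_1(\lambda)\ \Big|\ \nabla f(\bar x)^T(x-\bar x)=0,\ \nabla f(x)\ne0,\ \tfrac{\nabla f(x)}{\|\nabla f(x)\|}=\tfrac{\nabla f(\bar x)}{\|\nabla f(\bar x)\|}\Big\}, \] \[ \hat S_2'(\lambda):=\Big\{x\in X_1(\lambda)\ \Big|\ \nabla f(\bar x)^T(x-\bar x)\le0,\ \nabla f(x)\ne0,\ \tfrac{\nabla f(x)}{\|\nabla f(x)\|}=\tfrac{\nabla f(\bar x)}{\|\nabla f(\bar x)\|}\Big\}. \] Then $\bar S=\hat S_1'(\lambda)=\hat S_2'(\lambda)$.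
   Context: Quasiconvexity on $\Gamma$: $f(x+t(y-x))\le\max\{f(x),f(y)\}$ for all $x,y\in\Gamma$, $t\in[0,1]$. Feasible set $S:=\{x\in X\mid g_i(x)\le0,\ i=1,\dots,m\}$; $\bar S$ the set of global minimizers of $f$ on $S$. Active index set $I(x):=\{i\mid g_i(x)=0\}$. For a cone $C$, its negative polar is $C^*:=\{x\in\mathbb R^n\mid c^Tx\le 0\ \forall c\in C\}$; $T_X(x)$ is the tangent cone of $X$ at $x$ and $N_X(x):=(T_X(x))^*$ is the normal cone. GMFCQ holds at $\bar x$ iff there is $y\in (N_X(\bar x))^*$ with $\nabla g_i(\bar x)^Ty<0$ for all $i\in I(\bar x)$. A KKT multiplier at $\bar x$ is $\lambda\in\mathbb R^m$ with $\lambda_i\ge0$ for all $i$, $\lambda_ig_i(\bar x)=0$ for all $i$, and $\big[\nabla f(\bar x)+\sum_{i\in I(\bar x)}\lambda_i\nabla g_i(\bar x)\big]^T(x-\bar x)\ge0$ for all $x\in X$. Define $\tilde I(\bar x,\lambda):=\{i\mid g_i(\bar x)=0,\ \lambda_i>0\}$ and $X_1(\lambda):=\{x\in X\mid g_i(x)=0\ \forall i\in\tilde I(\bar x,\lambda),\ g_i(x)\le0\ \forall i\notin\tilde I(\bar x,\lambda)\}$. *)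

theory Defs
  imports "HOL-Analysis.Analysis"
begin

definition quasiconvex_on :: "'a::real_vector set \<Rightarrow> ('a \<Rightarrow> real) \<Rightarrow> bool" where
  "quasiconvex_on \<Gamma> f \<longleftrightarrow>
     (\<forall>x\<in>\<Gamma>. \<forall>y\<in>\<Gamma>. \<forall>t::real. 0 \<le> t \<and> t \<le> 1 \<longrightarrow> f (x + t *\<^sub>R (y - x)) \<le> max (f x) (f y))"

definition feasible :: "'a set \<Rightarrow> (nat \<Rightarrow> 'a \<Rightarrow> real) \<Rightarrow> nat \<Rightarrow> 'a set" where
  "feasible X g m = {x \<in> X. \<forall>i\<in>{1..m}. g i x \<le> 0}"

definition solset :: "('a \<Rightarrow> real) \<Rightarrow> 'a set \<Rightarrow> 'a set" where
  "solset f S = {x \<in> S. \<forall>y\<in>S. f x \<le> f y}"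

definition active :: "(nat \<Rightarrow> 'a \<Rightarrow> real) \<Rightarrow> nat \<Rightarrow> 'a \<Rightarrow> nat set" where
  "active g m x = {i \<in> {1..m}. g i x = 0}"

definition polar :: "'a::real_inner set \<Rightarrow> 'a set" where
  "polar C = {x. \<forall>c\<in>C. c \<bullet> x \<le> 0}"

definition tangent_cone :: "'a::real_normed_vector set \<Rightarrow> 'a \<Rightarrow> 'a set" where
  "tangent_cone X x = {d. \<exists>xs t. (\<forall>k. xs k \<in> X) \<and> (\<forall>k. t k > (0::real)) \<and>
       xs \<longlonglongrightarrow> x \<and> t \<longlonglongrightarrow> 0 \<and> (\<lambda>k. (1 / t k) *\<^sub>R (xs k - x)) \<longlonglongrightarrow> d}"

definition normal_cone :: "'a::real_inner set \<Rightarrow> 'a \<Rightarrow> 'a set" where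
  "normal_cone X x = polar (tangent_cone X x)"

text \<open>GMFCQ at xb; dg i is the gradient map of g i.\<close>
definition GMFCQ :: "'a::real_inner set \<Rightarrow> (nat \<Rightarrow> 'a \<Rightarrow> real) \<Rightarrow> (nat \<Rightarrow> 'a \<Rightarrow> 'a) \<Rightarrow> nat \<Rightarrow> 'a \<Rightarrow> bool" where
  "GMFCQ X g dg m xb \<longleftrightarrow> (\<exists>y\<in>polar (normal_cone X xb). \<forall>i\<in>active g m xb. dg i xb \<bullet> y < 0)"

definition KKT_mult :: "'a::real_inner set \<Rightarrow> ('a \<Rightarrow> 'a) \<Rightarrow> (nat \<Rightarrow> 'a \<Rightarrow> real) \<Rightarrow> (nat \<Rightarrow> 'a \<Rightarrow> 'a)
     \<Rightarrow> nat \<Rightarrow> 'a \<Rightarrow> (nat \<Rightarrow> real) \<Rightarrow> bool" where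
  "KKT_mult X df g dg m xb lam \<longleftrightarrow>
     (\<forall>i\<in>{1..m}. lam i \<ge> 0) \<and> (\<forall>i\<in>{1..m}. lam i * g i xb = 0) \<and>
     (\<forall>x\<in>X. (df xb + (\<Sum>i\<in>active g m xb. lam i *\<^sub>R dg i xb)) \<bullet> (x - xb) \<ge> 0)"

definition Itilde :: "(nat \<Rightarrow> 'a \<Rightarrow> real) \<Rightarrow> nat \<Rightarrow> 'a \<Rightarrow> (nat \<Rightarrow> real) \<Rightarrow> nat set" where
  "Itilde g m xb lam = {i \<in> {1..m}. g i xb = 0 \<and> lam i > 0}"

definition X1 :: "'a set \<Rightarrow> (nat \<Rightarrow> 'a \<Rightarrow> real) \<Rightarrow> nat \<Rightarrow> 'a \<Rightarrow> (nat \<Rightarrow> real) \<Rightarrow> 'a set" where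
  "X1 X g m xb lam = {x \<in> X. (\<forall>i\<in>Itilde g m xb lam. g i x = 0) \<and>
                              (\<forall>i\<in>{1..m} - Itilde g m xb lam. g i x \<le> 0)}"

definition S1' :: "'a::real_inner set \<Rightarrow> ('a \<Rightarrow> 'a) \<Rightarrow> (nat \<Rightarrow> 'a \<Rightarrow> real) \<Rightarrow> nat \<Rightarrow> 'a
     \<Rightarrow> (nat \<Rightarrow> real) \<Rightarrow> 'a set" where
  "S1' X df g m xb lam = {x \<in> X1 X g m xb lam. inner (df xb) (x - xb) = 0 \<and> df x \<noteq> 0 \<and>
       (1 / norm (df x)) *\<^sub>R df x = (1 / norm (df xb)) *\<^sub>R df xb}"

definition S2' :: "'a::real_inner set \<Rightarrow> ('a \<Rightarrow> 'a) \<Rightarrow> (nat \<Rightarrow> 'a \<Rightarrow> real) \<Rightarrow> nat \<Rightarrow> 'a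
     \<Rightarrow> (nat \<Rightarrow> real) \<Rightarrow> 'a set" where
  "S2' X df g m xb lam = {x \<in> X1 X g m xb lam. inner (df xb) (x - xb) \<le> 0 \<and> df x \<noteq> 0 \<and>
       (1 / norm (df x)) *\<^sub>R df x = (1 / norm (df xb)) *\<^sub>R df xb}"

end

theory Submission
  imports Defs
begin

lemma dir_deriv:
  fixes D u v :: "'a::real_inner"
  assumes "(f has_derivative (\<lambda>h. D \<bullet> h)) (at u)"
  shows "((\<lambda>t. f (u + t *\<^sub>R v)) has_real_derivative (D \<bullet> v)) (at 0)"
proof -
  have 1: "((\<lambda>t. u + t *\<^sub>R v) has_derivative (\<lambda>t. t *\<^sub>R v)) (at 0)"
    by (auto intro!: derivative_eq_intros)
  have 2: "(f has_derivative (\<lambda>h. D \<bullet> h)) (at ((\<lambda>t. u + t *\<^sub>R v) 0))" using assms by simp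
  have "((f \<circ> (\<lambda>t. u + t *\<^sub>R v)) has_derivative ((\<lambda>h. D \<bullet> h) \<circ> (\<lambda>t. t *\<^sub>R v))) (at 0)"
    by (rule diff_chain_at[OF 1 2])
  moreover have "((\<lambda>h. D \<bullet> h) \<circ> (\<lambda>t. t *\<^sub>R v)) = (*) (D \<bullet> v)"
    by (auto simp: fun_eq_iff)
  ultimately show ?thesis by (simp add: has_field_derivative_def o_def)
qed

lemma open_step:
  fixes u v :: "'a::real_normed_vector"
  assumes "open G" "u \<in> G"
  shows "\<exists>\<delta>>0. \<forall>h. 0 \<le> h \<and> h < \<delta> \<longrightarrow> u + h *\<^sub>R v \<in> G"
proof -
  obtain e where e: "e > 0" "\<forall>y. dist y u < e \<longrightarrow> y \<in> G"
    using assms open_dist by metis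
  define \<delta> where "\<delta> = e / (norm v + 1)"
  have np: "norm v + 1 > 0" by (simp add: add_nonneg_pos)
  have dp: "\<delta> > 0" using e np by (simp add: \<delta>_def)
  { fix h :: real assume h: "0 \<le> h" "h < \<delta>"
    have "dist (u + h *\<^sub>R v) u = h * norm v" using h by (simp add: dist_norm)
    also have "\<dots> \<le> h * (norm v + 1)" using h by (simp add: mult_left_mono)
    also have "\<dots> < \<delta> * (norm v + 1)" using h np by simp
    also have "\<dots> = e" using np by (simp add: \<delta>_def)
    finally have "u + h *\<^sub>R v \<in> G" using e by auto }
  thus ?thesis using dp by blast
qed

lemma qc_grad_le:
  fixes D u z :: "'a::real_inner"
  assumes qc: "quasiconvex_on G f"
    and der: "(f has_derivative (\<lambda>h. D \<bullet> h)) (at u)" and u: "u \<in> G" and z: "z \<in> G"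
    and le: "f z \<le> f u"
  shows "D \<bullet> (z - u) \<le> 0"
proof (rule ccontr)
  assume "\<not> ?thesis" hence pos: "D \<bullet> (z - u) > 0" by simp
  from DERIV_pos_inc_right[OF dir_deriv[OF der] pos] obtain \<delta> where
    d: "\<delta> > 0" "\<forall>h>0. h < \<delta> \<longrightarrow> f (u + 0 *\<^sub>R (z - u)) < f (u + (0 + h) *\<^sub>R (z - u))" by blast
  define h where "h = min (\<delta>/2) 1"
  have h: "h > 0" "h < \<delta>" "h \<le> 1" using d by (auto simp: h_def)
  have "f u < f (u + h *\<^sub>R (z - u))" using d h by auto
  moreover have "f (u + h *\<^sub>R (z - u)) \<le> max (f u) (f z)"
    using qc u z h unfolding quasiconvex_on_def by auto
  ultimately show False using le by auto
qed

lemma qc_grad_lt: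
  fixes D u z :: "'a::real_inner"
  assumes op: "open G" and qc: "quasiconvex_on G f"
    and derall: "\<forall>x\<in>G. \<exists>D'. (f has_derivative (\<lambda>h. D' \<bullet> h)) (at x)"
    and der: "(f has_derivative (\<lambda>h. D \<bullet> h)) (at u)" and u: "u \<in> G" and z: "z \<in> G"
    and D: "D \<noteq> 0" and lt: "f z < f u"
  shows "D \<bullet> (z - u) < 0"
proof -
  obtain D' where D': "(f has_derivative (\<lambda>h. D' \<bullet> h)) (at z)" using derall z by blast
  have "isCont (\<lambda>t. f (z + t *\<^sub>R D)) 0" by (rule DERIV_isCont[OF dir_deriv[OF D']])
  hence "((\<lambda>t. f (z + t *\<^sub>R D)) \<longlongrightarrow> f z) (at 0)" by (simp add: isCont_def)
  from order_tendstoD(2)[OF this lt] obtain e where e: "e > 0"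
    "\<forall>t. t \<noteq> 0 \<and> dist t 0 < e \<longrightarrow> f (z + t *\<^sub>R D) < f u"
    unfolding eventually_at by auto
  obtain \<delta> where dl: "\<delta> > 0" "\<forall>h. 0 \<le> h \<and> h < \<delta> \<longrightarrow> z + h *\<^sub>R D \<in> G"
    using open_step[OF op z] by blast
  define h where "h = min e \<delta> / 2"
  have h: "h > 0" "h < e" "h < \<delta>" using e dl by (auto simp: h_def)
  have w: "z + h *\<^sub>R D \<in> G" using dl h by auto
  have "f (z + h *\<^sub>R D) < f u" using e h by auto
  hence "D \<bullet> (z + h *\<^sub>R D - u) \<le> 0"
    using qc_grad_le[OF qc der u w] by auto
  moreover have "D \<bullet> (z + h *\<^sub>R D - u) = D \<bullet> (z - u) + h * (D \<bullet> D)"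
    by (simp add: algebra_simps inner_diff_right inner_add_right)
  moreover have "D \<bullet> D > 0" using D by simp
  ultimately show ?thesis using h by (smt (verit) mult_pos_pos)
qed

theorem theorem4:
  fixes \<Gamma> X :: "'a::euclidean_space set"
    and f :: "'a \<Rightarrow> real" and df :: "'a \<Rightarrow> 'a"
    and g :: "nat \<Rightarrow> 'a \<Rightarrow> real" and dg :: "nat \<Rightarrow> 'a \<Rightarrow> 'a"
    and m :: nat and xb :: 'a and lam :: "nat \<Rightarrow> real"
  assumes "open \<Gamma>" and "convex \<Gamma>" and "X \<subseteq> \<Gamma>" and "convex X"
    and "xb \<in> solset f (feasible X g m)"
    and "\<forall>x\<in>\<Gamma>. (f has_derivative (\<lambda>h. df x \<bullet> h)) (at x)" and "continuous_on \<Gamma> df"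
    and "quasiconvex_on \<Gamma> f"
    and "\<forall>i\<in>active g m xb. \<forall>x\<in>\<Gamma>. (g i has_derivative (\<lambda>h. dg i x \<bullet> h)) (at x)"
    and "\<forall>i\<in>active g m xb. quasiconvex_on \<Gamma> (g i)"
    and "\<forall>i\<in>{1..m} - active g m xb. isCont (g i) xb"
    and "df xb \<noteq> 0"
    and "GMFCQ X g dg m xb"
    and "KKT_mult X df g dg m xb lam"
  shows "solset f (feasible X g m) = S1' X df g m xb lam
       \<and> solset f (feasible X g m) = S2' X df g m xb lam"
proof -
  note op = assms(1) and cvG = assms(2) and XG = assms(3) and derf = assms(6)
    and qcf = assms(8) and derg = assms(9) and qcg = assms(10) and dnz = assms(12)
  define c where "c = f xb"
  define d where "d = df xb"
  define S where "S = feasible X g m"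
  have xbS: "xb \<in> S" and xbmin: "\<forall>y\<in>S. f xb \<le> f y"
    using assms(5) unfolding S_def solset_def by auto
  have xbG: "xb \<in> \<Gamma>" using xbS XG unfolding S_def feasible_def by auto
  have derall: "\<forall>x\<in>\<Gamma>. \<exists>D'. (f has_derivative (\<lambda>h. D' \<bullet> h)) (at x)" using derf by blast
  have dxb: "(f has_derivative (\<lambda>h. d \<bullet> h)) (at xb)" using derf xbG d_def by auto
  have d0: "d \<noteq> 0" using dnz d_def by simp
  have dd: "d \<bullet> d > 0" using d0 by simp
  have HS: "\<And>z. z \<in> \<Gamma> \<Longrightarrow> d \<bullet> (z - xb) \<ge> 0 \<Longrightarrow> f z \<ge> c"
  proof (rule ccontr)
    fix z assume z: "z \<in> \<Gamma>" "d \<bullet> (z - xb) \<ge> 0" "\<not> f z \<ge> c"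
    hence "d \<bullet> (z - xb) < 0" using qc_grad_lt[OF op qcf derall dxb xbG z(1) d0] c_def by auto
    thus False using z by simp
  qed
  have NZ: "\<And>x. x \<in> \<Gamma> \<Longrightarrow> f x = c \<Longrightarrow> d \<bullet> (x - xb) = 0 \<Longrightarrow> df x \<noteq> 0"
  proof
    fix x assume x: "x \<in> \<Gamma>" "f x = c" "d \<bullet> (x - xb) = 0" "df x = 0"
    have "isCont df xb" using assms(7) op xbG continuous_on_eq_continuous_at by blast
    moreover have "((\<lambda>t::real. xb + t *\<^sub>R (x - xb)) \<longlongrightarrow> xb) (at 0)"
      by (auto intro!: tendsto_eq_intros)
    ultimately have "((\<lambda>t::real. df (xb + t *\<^sub>R (x - xb))) \<longlongrightarrow> df xb) (at 0)"
      by (rule isCont_tendsto_compose)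
    hence "((\<lambda>t::real. df (xb + t *\<^sub>R (x - xb)) \<bullet> d) \<longlongrightarrow> d \<bullet> d) (at 0)"
      unfolding d_def by (auto intro!: tendsto_eq_intros)
    from order_tendstoD(1)[OF this dd] obtain e where e: "e > 0"
      "\<forall>t::real. t \<noteq> 0 \<and> dist t 0 < e \<longrightarrow> df (xb + t *\<^sub>R (x - xb)) \<bullet> d > 0"
      unfolding eventually_at by auto
    define \<tau> where "\<tau> = min (e/2) (1/2)"
    have \<tau>: "\<tau> > 0" "\<tau> < 1" "\<tau> < e" using e by (auto simp: \<tau>_def)
    define b where "b = xb + \<tau> *\<^sub>R (x - xb)"
    have bG: "b \<in> \<Gamma>"
    proof -
      have "(1 - \<tau>) *\<^sub>R xb + \<tau> *\<^sub>R x \<in> \<Gamma>" using cvG xbG x(1) \<tau> unfolding convex_alt by auto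
      moreover have "(1 - \<tau>) *\<^sub>R xb + \<tau> *\<^sub>R x = b" by (simp add: b_def algebra_simps)
      ultimately show ?thesis by simp
    qed
    have dbd: "df b \<bullet> d > 0" using e \<tau> unfolding b_def by auto
    have fb1: "f b \<le> c" using qcf xbG x \<tau> unfolding quasiconvex_on_def b_def c_def
      by (metis less_eq_real_def max.idem)
    have fb2: "f b \<ge> c" using HS[OF bG] x(3) by (simp add: b_def)
    have fb: "f b = c" using fb1 fb2 by simp
    have dfb: "(f has_derivative (\<lambda>h. df b \<bullet> h)) (at b)" using derf bG by auto
    have dfx: "(f has_derivative (\<lambda>h. df x \<bullet> h)) (at x)" using derf x by auto
    define vA where "vA = (1 - \<tau>) *\<^sub>R d"
    define vB where "vB = (- (\<tau>/2)) *\<^sub>R d"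
    define vP where "vP = (\<tau> * (1 - \<tau>) / 2) *\<^sub>R d"
    have DA: "((\<lambda>t. f (x + t *\<^sub>R vA)) has_real_derivative 0) (at 0)"
      using dir_deriv[OF dfx, of vA] x(4) by simp
    have DB: "((\<lambda>t. f (xb + t *\<^sub>R vB)) has_real_derivative (d \<bullet> vB)) (at 0)"
      using dir_deriv[OF dxb] .
    have DP: "((\<lambda>t. f (b + t *\<^sub>R vP)) has_real_derivative (df b \<bullet> vP)) (at 0)"
      using dir_deriv[OF dfb] .
    have pP: "df b \<bullet> vP > 0" using dbd \<tau> by (simp add: vP_def)
    have nB: "d \<bullet> vB < 0" using dd \<tau> by (simp add: vB_def)
    have G1: "((\<lambda>t. f (b + t *\<^sub>R vP) - f (x + t *\<^sub>R vA)) has_real_derivative (df b \<bullet> vP - 0)) (at 0)"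
      by (rule DERIV_diff[OF DP DA])
    have G2: "((\<lambda>t. f (b + t *\<^sub>R vP) - f (xb + t *\<^sub>R vB)) has_real_derivative (df b \<bullet> vP - d \<bullet> vB)) (at 0)"
      by (rule DERIV_diff[OF DP DB])
    obtain \<delta>1 where d1: "\<delta>1 > 0" "\<forall>h>0. h < \<delta>1 \<longrightarrow> f (b + 0 *\<^sub>R vP) - f (x + 0 *\<^sub>R vA) <
        f (b + (0 + h) *\<^sub>R vP) - f (x + (0 + h) *\<^sub>R vA)"
      using DERIV_pos_inc_right[OF G1] pP by auto
    obtain \<delta>2 where d2: "\<delta>2 > 0" "\<forall>h>0. h < \<delta>2 \<longrightarrow> f (b + 0 *\<^sub>R vP) - f (xb + 0 *\<^sub>R vB) <
        f (b + (0 + h) *\<^sub>R vP) - f (xb + (0 + h) *\<^sub>R vB)"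
      using DERIV_pos_inc_right[OF G2] pP nB by auto
    obtain \<delta>3 where d3: "\<delta>3 > 0" "\<forall>h. 0 \<le> h \<and> h < \<delta>3 \<longrightarrow> x + h *\<^sub>R vA \<in> \<Gamma>"
      using open_step[OF op x(1)] by blast
    obtain \<delta>4 where d4: "\<delta>4 > 0" "\<forall>h. 0 \<le> h \<and> h < \<delta>4 \<longrightarrow> xb + h *\<^sub>R vB \<in> \<Gamma>"
      using open_step[OF op xbG] by blast
    define h where "h = min (min \<delta>1 \<delta>2) (min \<delta>3 \<delta>4) / 2"
    have h: "h > 0" "h < \<delta>1" "h < \<delta>2" "h < \<delta>3" "h < \<delta>4" using d1 d2 d3 d4 by (auto simp: h_def)
    have AG: "x + h *\<^sub>R vA \<in> \<Gamma>" using d3 h by auto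
    have BG: "xb + h *\<^sub>R vB \<in> \<Gamma>" using d4 h by auto
    have l1: "f (x + h *\<^sub>R vA) < f (b + h *\<^sub>R vP)" using d1 h x fb by auto
    have l2: "f (xb + h *\<^sub>R vB) < f (b + h *\<^sub>R vP)" using d2 h fb c_def by auto
    have eq: "(xb + h *\<^sub>R vB) + \<tau> *\<^sub>R ((x + h *\<^sub>R vA) - (xb + h *\<^sub>R vB)) = b + h *\<^sub>R vP"
      apply (simp add: b_def vA_def vB_def vP_def algebra_simps)
      apply (simp only: scaleR_add_left[symmetric])
      apply (rule arg_cong[where f="\<lambda>r. r *\<^sub>R d"])
      apply (simp add: field_simps)
      done
    have "f ((xb + h *\<^sub>R vB) + \<tau> *\<^sub>R ((x + h *\<^sub>R vA) - (xb + h *\<^sub>R vB)))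
        \<le> max (f (xb + h *\<^sub>R vB)) (f (x + h *\<^sub>R vA))"
      using qcf AG BG \<tau> unfolding quasiconvex_on_def by auto
    thus False using eq l1 l2 by auto
  qed
  have PAR: "\<And>x. x \<in> \<Gamma> \<Longrightarrow> f x = c \<Longrightarrow> d \<bullet> (x - xb) = 0 \<Longrightarrow> \<exists>\<alpha>>0. df x = \<alpha> *\<^sub>R d"
  proof -
    fix x assume x: "x \<in> \<Gamma>" "f x = c" "d \<bullet> (x - xb) = 0"
    have nz: "df x \<noteq> 0" using NZ[OF x] .
    have dfx: "(f has_derivative (\<lambda>h. df x \<bullet> h)) (at x)" using derf x by auto
    have pos: "df x \<bullet> v \<ge> 0" if v: "d \<bullet> v > 0" for v
    proof (rule ccontr)
      assume "\<not> ?thesis" hence neg: "df x \<bullet> v < 0" by simp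
      from DERIV_neg_dec_right[OF dir_deriv[OF dfx] neg] obtain \<delta> where
        dl: "\<delta> > 0" "\<forall>h>0. h < \<delta> \<longrightarrow> f (x + 0 *\<^sub>R v) > f (x + (0 + h) *\<^sub>R v)" by blast
      obtain \<delta>' where dl': "\<delta>' > 0" "\<forall>h. 0 \<le> h \<and> h < \<delta>' \<longrightarrow> x + h *\<^sub>R v \<in> \<Gamma>"
        using open_step[OF op x(1)] by blast
      define h where "h = min \<delta> \<delta>' / 2"
      have h: "h > 0" "h < \<delta>" "h < \<delta>'" using dl dl' by (auto simp: h_def)
      have inG: "x + h *\<^sub>R v \<in> \<Gamma>" using dl' h by auto
      have "f (x + h *\<^sub>R v) < c" using dl h x by auto
      moreover have "d \<bullet> (x + h *\<^sub>R v - xb) = d \<bullet> (x - xb) + h * (d \<bullet> v)"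
        by (simp add: algebra_simps inner_diff_right inner_add_right)
      hence "d \<bullet> (x + h *\<^sub>R v - xb) \<ge> 0" using x(3) h v by simp
      ultimately show False using HS[OF inG] by simp
    qed
    define \<alpha> where "\<alpha> = (df x \<bullet> d) / (d \<bullet> d)"
    define w where "w = df x - \<alpha> *\<^sub>R d"
    have wd: "w \<bullet> d = 0" using dd by (simp add: w_def \<alpha>_def inner_diff_left)
    have dfw: "df x = \<alpha> *\<^sub>R d + w" by (simp add: w_def)
    have w0: "w = 0"
    proof (rule ccontr)
      assume wn: "w \<noteq> 0"
      hence ww: "w \<bullet> w > 0" by simp
      define t where "t = - (\<alpha> * (d \<bullet> d) + 1) / (w \<bullet> w)"
      have "d \<bullet> (d + t *\<^sub>R w) > 0" using dd wd by (simp add: inner_add_right inner_commute)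
      hence "df x \<bullet> (d + t *\<^sub>R w) \<ge> 0" by (rule pos)
      moreover have "df x \<bullet> (d + t *\<^sub>R w) = \<alpha> * (d \<bullet> d) + t * (w \<bullet> w)"
        using wd by (simp add: dfw inner_add_right inner_add_left inner_commute)
      moreover have "t * (w \<bullet> w) = - (\<alpha> * (d \<bullet> d) + 1)" using ww by (simp add: t_def)
      ultimately show False by simp
    qed
    have "df x \<bullet> d \<ge> 0" using pos[OF dd] .
    hence "\<alpha> \<ge> 0" using dd by (simp add: \<alpha>_def)
    moreover have "\<alpha> \<noteq> 0" using nz w0 dfw by auto
    ultimately have "\<alpha> > 0" by simp
    thus "\<exists>\<alpha>>0. df x = \<alpha> *\<^sub>R d" using dfw w0 by auto
  qed
  have normeq: "(1 / norm (df x)) *\<^sub>R df x = (1 / norm (df xb)) *\<^sub>R df xb"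
    if "\<alpha> > 0" "df x = \<alpha> *\<^sub>R d" for x \<alpha>
    using that d0 by (simp add: d_def)
  have sub1: "solset f S \<subseteq> S1' X df g m xb lam"
  proof
    fix x assume "x \<in> solset f S"
    hence xS: "x \<in> S" and xmin: "\<forall>y\<in>S. f x \<le> f y" unfolding solset_def by auto
    have xX: "x \<in> X" and gx: "\<forall>i\<in>{1..m}. g i x \<le> 0" using xS unfolding S_def feasible_def by auto
    have xG: "x \<in> \<Gamma>" using xX XG by auto
    have fx: "f x = c" using xmin xbmin xS xbS c_def by (metis order_antisym)
    have le0: "d \<bullet> (x - xb) \<le> 0" using qc_grad_le[OF qcf dxb xbG xG] fx c_def by simp
    let ?A = "active g m xb"
    have finA: "finite ?A" unfolding active_def by auto
    have Asub: "?A \<subseteq> {1..m}" unfolding active_def by auto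
    have gle: "dg i xb \<bullet> (x - xb) \<le> 0" if i: "i \<in> ?A" for i
    proof -
      have "g i xb = 0" using i unfolding active_def by auto
      moreover have "g i x \<le> 0" using gx i Asub by auto
      ultimately show ?thesis using qc_grad_le[OF qcg[rule_format, OF i] derg[rule_format, OF i xbG] xbG xG] by simp
    qed
    have lampos: "lam i \<ge> 0" if "i \<in> ?A" for i using assms(14) that Asub unfolding KKT_mult_def by auto
    have kkt: "(df xb + (\<Sum>i\<in>?A. lam i *\<^sub>R dg i xb)) \<bullet> (x - xb) \<ge> 0"
      using assms(14) xX unfolding KKT_mult_def by auto
    hence kkt2: "d \<bullet> (x - xb) + (\<Sum>i\<in>?A. lam i * (dg i xb \<bullet> (x - xb))) \<ge> 0"
      by (simp add: d_def inner_add_left inner_sum_left)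
    have terms: "\<forall>i\<in>?A. lam i * (dg i xb \<bullet> (x - xb)) \<le> 0"
      using gle lampos by (simp add: mult_nonneg_nonpos)
    hence sumle: "(\<Sum>i\<in>?A. lam i * (dg i xb \<bullet> (x - xb))) \<le> 0" by (simp add: sum_nonpos)
    have dx0: "d \<bullet> (x - xb) = 0" using kkt2 sumle le0 by simp
    have sum0: "(\<Sum>i\<in>?A. lam i * (dg i xb \<bullet> (x - xb))) = 0" using kkt2 sumle le0 by simp
    have each0: "\<forall>i\<in>?A. lam i * (dg i xb \<bullet> (x - xb)) = 0"
    proof -
      have "(\<Sum>i\<in>?A. - (lam i * (dg i xb \<bullet> (x - xb)))) = 0" using sum0 by (simp add: sum_negf)
      moreover have "\<forall>i\<in>?A. - (lam i * (dg i xb \<bullet> (x - xb))) \<ge> 0" using terms by auto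
      ultimately show ?thesis using sum_nonneg_eq_0_iff[OF finA] by (simp add: sum_nonneg_eq_0_iff[OF finA])
    qed
    have X1: "x \<in> X1 X g m xb lam"
      unfolding X1_def
    proof (intro CollectI conjI ballI)
      show "x \<in> X" by (rule xX)
    next
      fix i assume i: "i \<in> {1..m} - Itilde g m xb lam"
      thus "g i x \<le> 0" using gx by auto
    next
      fix i assume i: "i \<in> Itilde g m xb lam"
      hence iA: "i \<in> ?A" and lp: "lam i > 0" unfolding Itilde_def active_def by auto
      have "dg i xb \<bullet> (x - xb) = 0" using each0 iA lp by auto
      moreover have "dg i xb \<noteq> 0"
        using assms(13) iA unfolding GMFCQ_def by fastforce
      moreover have gxb: "g i xb = 0" using iA unfolding active_def by auto
      moreover have "g i x \<le> 0" using gx iA Asub by auto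
      ultimately show "g i x = 0"
        using qc_grad_lt[OF op qcg[rule_format, OF iA] _ derg[rule_format, OF iA xbG] xbG xG]
          derg iA by (metis less_eq_real_def less_irrefl)
    qed
    obtain \<alpha> where a: "\<alpha> > 0" "df x = \<alpha> *\<^sub>R d" using PAR[OF xG fx dx0] by blast
    show "x \<in> S1' X df g m xb lam"
      unfolding S1'_def using X1 dx0 a normeq[OF a] d0 by (auto simp: d_def)
  qed
  have sub12: "S1' X df g m xb lam \<subseteq> S2' X df g m xb lam"
    unfolding S1'_def S2'_def by auto
  have sub2: "S2' X df g m xb lam \<subseteq> solset f S"
  proof
    fix x assume x: "x \<in> S2' X df g m xb lam"
    hence xX1: "x \<in> X1 X g m xb lam" and le: "d \<bullet> (x - xb) \<le> 0" and nz: "df x \<noteq> 0"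
      and ne: "(1 / norm (df x)) *\<^sub>R df x = (1 / norm d) *\<^sub>R d"
      unfolding S2'_def d_def by auto
    have xS: "x \<in> S" using xX1 unfolding X1_def S_def feasible_def by auto
    have xG: "x \<in> \<Gamma>" using xS XG unfolding S_def feasible_def by auto
    define \<beta> where "\<beta> = norm (df x) / norm d"
    have bp: "\<beta> > 0" using nz d0 by (simp add: \<beta>_def)
    have dfx: "df x = \<beta> *\<^sub>R d"
    proof -
      have "norm (df x) *\<^sub>R ((1 / norm (df x)) *\<^sub>R df x) = norm (df x) *\<^sub>R ((1 / norm d) *\<^sub>R d)"
        using ne by simp
      thus ?thesis using nz by (simp add: \<beta>_def)
    qed
    have "f x \<le> c"
    proof (rule ccontr)
      assume "\<not> f x \<le> c" hence lt: "f xb < f x" using c_def by simp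
      have "(f has_derivative (\<lambda>h. df x \<bullet> h)) (at x)" using derf xG by auto
      from qc_grad_lt[OF op qcf derall this xG xbG nz lt]
      have "\<beta> * (d \<bullet> (xb - x)) < 0" using dfx by simp
      hence "d \<bullet> (xb - x) < 0" using bp by (simp add: mult_less_0_iff)
      moreover have "d \<bullet> (xb - x) = - (d \<bullet> (x - xb))" by (simp add: inner_diff_right)
      ultimately show False using le by simp
    qed
    thus "x \<in> solset f S" using xS xbmin c_def unfolding solset_def by force
  qed
  show ?thesis using sub1 sub12 sub2 unfolding S_def by blast
qed

end
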